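(* Let $\ell\ge 1$ and $w\ge 0$ be integers, and let $A=\langle A_1,\dots,A_\ell\rangle$ and $B=\langle B_1,\dots,B_\ell\rangle$ be real sequences. Let $i,j\in\{1,\dots,\ell\}$ with $i-w\le j\le i+w$, so that $(i,j)$ is an alignment permitted by the window $w$. If $B_j>\mathbb{U}^{\Omega}_j$, then either $A_i<\mathbb{L}^B_i\le B_j\le \mathbb{U}^B_i$ or $\mathbb{L}^B_i\le A_i\le B_j\le \mathbb{U}^B_i$.
   Context: For a real sequence $S=\langle S_1,\dots,S_\ell\rangle$ and window $w$, the upper and lower envelopes are the sequences $\mathbb{U}^S_i=\max_{\max(1,i-w)\le j\le \min(\ell,i+w)} S_j$ and $\mathbb{L}^S_i=\min_{\max(1,i-w)\le j\le \min(\ell,i+w)} S_j$ for $1\le i\le\ell$. The projection $\Omega=\Omega_w(A,B)$ of $A$ onto $B$ is the sequence with $\Omega_i=\mathbb{U}^B_i$ if $A_i>\mathbb{U}^B_i$, $\Omega_i=\mathbb{L}^B_i$ if $A_i<\mathbb{L}^B_i$, and $\Omega_i=A_i$ otherwise. $\mathbb{U}^{\Omega}$ and $\mathbb{L}^{\Omega}$ denote the upper and lower envelopes (with the same window $w$) of $\Omega$. *)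

theory Defs
  imports Complex_Main
begin

text \<open>Sequences of length l are functions nat \<Rightarrow> real, meaningful on indices 1..l.
  Window w is a natural number.\<close>

definition win :: "nat \<Rightarrow> nat \<Rightarrow> nat \<Rightarrow> nat set" where
  "win l w i = {j. max 1 (int i - int w) \<le> int j \<and> j \<le> min l (i + w)}"

definition upper_env :: "nat \<Rightarrow> nat \<Rightarrow> (nat \<Rightarrow> real) \<Rightarrow> nat \<Rightarrow> real" where
  "upper_env l w S i = Max (S ` win l w i)"

definition lower_env :: "nat \<Rightarrow> nat \<Rightarrow> (nat \<Rightarrow> real) \<Rightarrow> nat \<Rightarrow> real" where
  "lower_env l w S i = Min (S ` win l w i)"

definition projection :: "nat \<Rightarrow> nat \<Rightarrow> (nat \<Rightarrow> real) \<Rightarrow> (nat \<Rightarrow> real) \<Rightarrow> nat \<Rightarrow> real" where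
  "projection l w A B i =
     (if A i > upper_env l w B i then upper_env l w B i
      else if A i < lower_env l w B i then lower_env l w B i
      else A i)"

end

theory Submission
  imports Defs
begin

lemma win_finite: "finite (win l w i)"
  by (rule finite_subset[of _ "{..l}"]) (auto simp: win_def)

lemma in_win: "1 \<le> j \<Longrightarrow> j \<le> l \<Longrightarrow> int i - int w \<le> int j \<Longrightarrow> j \<le> i + w \<Longrightarrow> j \<in> win l w i"
  by (auto simp: win_def)

theorem mainTheorem1:
  fixes l w i j :: nat and A B :: "nat \<Rightarrow> real"
  assumes "l \<ge> 1"
    and "1 \<le> i" "i \<le> l" "1 \<le> j" "j \<le> l"
    and "int i - int w \<le> int j" "j \<le> i + w"
    and "B j > upper_env l w (projection l w A B) j"
  shows "(A i < lower_env l w B i \<and> lower_env l w B i \<le> B j \<and> B j \<le> upper_env l w B i)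
       \<or> (lower_env l w B i \<le> A i \<and> A i \<le> B j \<and> B j \<le> upper_env l w B i)"
proof -
  have ji: "j \<in> win l w i" using assms by (intro in_win) auto
  have ij: "i \<in> win l w j" using assms by (intro in_win) auto
  have U: "B j \<le> upper_env l w B i" unfolding upper_env_def
    using ji win_finite by (intro Max_ge) auto
  have L: "lower_env l w B i \<le> B j" unfolding lower_env_def
    using ji win_finite by (intro Min_le) auto
  have O: "projection l w A B i \<le> upper_env l w (projection l w A B) j" unfolding upper_env_def
    using ij win_finite by (intro Max_ge) auto
  have P: "projection l w A B i < B j" using O assms(8) by linarith
  show ?thesis using U L P unfolding projection_def by (auto split: if_splits)
qed

end
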